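(* Let $\sigma:\mathbb{R}^d\to\mathbb{R}^{d\times m}$ and $b:\mathbb{R}^d\to\mathbb{R}^d$ be continuous functions such that for some $C>0$ and all $x,y\in\mathbb{R}^d$ with $|x-y|<1$, $$\|\sigma(x)-\sigma(y)\|\le C|x-y|\sqrt{\log\tfrac{1}{|x-y|}},\qquad |b(x)-b(y)|\le C|x-y|\log\tfrac{1}{|x-y|}.$$ Then $\sigma$ and $b$ satisfy the following condition: there exist constants $C>0$ and $\mu>0$ such that for every integer $N>e$ and all $x,y\in\mathbb{R}^d$ with $|x|,|y|\le N$, $$\|\sigma(x)-\sigma(y)\|\le C\sqrt{\log N}\,|x-y|+C\frac{\log N}{N^{\mu}},\qquad |b(x)-b(y)|\le C\log N\,|x-y|+C\frac{\log N}{N^{\mu}}.$$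
   Context: $|\cdot|$ is the Euclidean norm and $\|\sigma\|^2=\sum_{i,j}\sigma_{ij}^2$. The expressions $u\log(1/u)$ and $u\sqrt{\log(1/u)}$ are taken to be $0$ at $u=0$. *)

theory Defs
  imports "HOL-Analysis.Analysis"
begin

text \<open>Frobenius (Hilbert-Schmidt) norm of a d x m matrix, stored as a vector of rows
  (rows indexed by 'd, columns by 'm): sum of squares of all entries.\<close>
definition frob_norm :: "real ^ 'm ^ 'd \<Rightarrow> real" where
  "frob_norm A = sqrt (\<Sum>i\<in>UNIV. \<Sum>j\<in>UNIV. (A $ i $ j)\<^sup>2)"

end

theory Submission
  imports Defs
begin


lemma scal_log:
  fixes r N :: real
  assumes r: "0 < r" "r \<le> 1/N" and N: "N > exp 1"
  shows "r * ln (1/r) \<le> ln N / N"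
proof -
  have "exp (1::real) > 1" by simp
  hence N0: "N > 0" using N by linarith
  have lN: "ln N \<ge> 1" using N N0 by (metis ln_exp ln_le_cancel_iff exp_gt_zero less_imp_le)
  define q where "q = 1/(N*r)"
  have q1: "q \<ge> 1" using r N0 by (simp add: q_def field_simps)
  have rs: "r = 1/(N*q)" using r N0 by (simp add: q_def)
  have "1/r = N*q" using r N0 by (simp add: q_def)
  moreover have "ln (N*q) = ln N + ln q" by (rule ln_mult_pos) (use N0 q1 in auto)
  ultimately have l: "ln (1/r) = ln N + ln q" by metis
  have "ln q \<le> q - 1" using q1 by (intro ln_le_minus_one) simp
  also have "\<dots> \<le> (q-1) * ln N" using q1 lN by (simp add: mult_le_cancel_left1)
  finally have key: "ln N + ln q \<le> q * ln N" by (simp add: algebra_simps)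
  have "r * ln (1/r) = r * (ln N + ln q)" by (simp only: l)
  also have "\<dots> = (ln N + ln q) / (N*q)" by (simp add: rs)
  also have "\<dots> \<le> q * ln N / (N * q)" using key N0 q1 by (intro divide_right_mono) auto
  also have "\<dots> = ln N / N" using q1 by simp
  finally show ?thesis .
qed

lemma scal_sqrt:
  fixes r N :: real
  assumes r: "0 < r" "r \<le> 1/N" and N: "N > exp 1"
  shows "r * sqrt (ln (1/r)) \<le> ln N / N"
proof -
  have "exp (1::real) > 1" by simp
  hence N0: "N > 0" using N by linarith
  have lN: "ln N \<ge> 1" using N N0 by (metis ln_exp ln_le_cancel_iff exp_gt_zero less_imp_le)
  define q where "q = 1/(N*r)"
  have q1: "q \<ge> 1" using r N0 by (simp add: q_def field_simps)
  have rs: "r = 1/(N*q)" using r N0 by (simp add: q_def)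
  have "1/r = N*q" using r N0 by (simp add: q_def)
  moreover have "ln (N*q) = ln N + ln q" by (rule ln_mult_pos) (use N0 q1 in auto)
  ultimately have l: "ln (1/r) = ln N + ln q" by metis
  have "ln q \<le> q - 1" using q1 by (intro ln_le_minus_one) simp
  also have "\<dots> \<le> q*q-1" using q1 by (simp add: mult_le_cancel_left1)
  also have "\<dots> = (q*q-1) * 1" by simp
  also have "\<dots> \<le> (q*q-1) * ln N" using q1 lN
    by (intro mult_left_mono) (auto simp: mult_le_cancel_left1 order_trans[OF q1])
  finally have key: "ln N + ln q \<le> q*q * ln N" by (simp add: algebra_simps)
  have "(r * sqrt (ln (1/r)))^2 = (ln N + ln q) / (N*q)^2"
    using l lN q1 by (simp add: rs power_mult_distrib power_divide)
  also have "\<dots> \<le> q*q * ln N / (N * q)^2" using key N0 q1 by (intro divide_right_mono) auto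
  also have "\<dots> = ln N / N^2" using q1 by (simp add: power2_eq_square)
  also have "\<dots> \<le> (ln N / N)^2"
  proof -
    have "ln N \<le> ln N * ln N" using lN by (simp add: mult_le_cancel_left1)
    thus ?thesis using N0 by (simp add: power_divide power2_eq_square divide_right_mono)
  qed
  finally have "(r * sqrt (ln (1/r)))^2 \<le> (ln N / N)^2" .
  moreover have "0 \<le> ln N / N" using lN N0 by (intro divide_nonneg_pos; linarith)
  ultimately show ?thesis using power2_le_imp_le by blast
qed

lemma chain:
  fixes f :: "'a::real_normed_vector \<Rightarrow> 'b::real_normed_vector"
  assumes K: "K \<ge> 0"
    and h: "\<And>x y. 1/4 \<le> norm(x-y) \<Longrightarrow> norm(x-y) \<le> 1/2 \<Longrightarrow> norm(f x - f y) \<le> K*norm(x-y)"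
    and r: "1/4 \<le> norm(x-y)"
  shows "norm(f x - f y) \<le> K * norm(x-y)"
proof -
  have "\<forall>x y. 1/4 \<le> norm(x-y) \<and> norm(x-y) \<le> (real n+2)/4 \<longrightarrow> norm(f x - f y) \<le> K * norm(x-y)" for n
  proof (induction n)
    case 0 then show ?case using h by auto
  next
    case (Suc n)
    show ?case
    proof (intro allI impI)
      fix x y :: 'a assume a: "1/4 \<le> norm(x-y) \<and> norm(x-y) \<le> (real (Suc n)+2)/4"
      show "norm(f x - f y) \<le> K * norm(x-y)"
      proof (cases "norm(x-y) \<le> 1/2")
        case True then show ?thesis using h a by auto
      next
        case False
        define r where "r = norm(x-y)"
        have r0: "r > 0" using a r_def by auto
        define z where "z = x + (1/(4*r)) *\<^sub>R (y - x)"
        have xz: "x - z = -((1/(4*r)) *\<^sub>R (y - x))" by (simp add: z_def)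
        have nxz: "norm (x - z) = 1/4" using r0 unfolding xz r_def
          by (simp add: norm_minus_commute)
        have zy: "z - y = (1 - 1/(4*r)) *\<^sub>R (x - y)"
          by (simp add: z_def algebra_simps)
        have c: "1 - 1/(4*r) \<ge> 0" using False r0 unfolding r_def by (simp add: field_simps)
        have "norm (z - y) = \<bar>1 - 1/(4*r)\<bar> * r" unfolding zy r_def by simp
        also have "\<dots> = (1 - 1/(4*r)) * r" using c by simp
        also have "\<dots> = r - 1/4" using r0 by (simp add: field_simps)
        finally have nzy: "norm (z - y) = r - 1/4" .
        have "norm (f x - f y) \<le> norm (f x - f z) + norm (f z - f y)"
          by (metis norm_triangle_ineq diff_add_cancel add_diff_eq)
        also have "\<dots> \<le> K * (1/4) + K * (r - 1/4)"
          using h[of x z] nxz Suc.IH[rule_format, of z y] nzy a False r_def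
          by (intro add_mono) auto
        also have "\<dots> = K * norm (x-y)" by (simp add: r_def algebra_simps)
        finally show ?thesis .
      qed
    qed
  qed
  moreover obtain n::nat where "4*norm(x-y) \<le> real n" using real_arch_simple by blast
  hence "norm(x-y) \<le> (real n+2)/4" by simp
  ultimately show ?thesis using r by blast
qed

lemma ln4: "1 \<le> ln (4::real)"
proof -
  have "exp 1 \<le> (4::real)" using exp_le by simp
  thus ?thesis by (metis ln_exp ln_le_cancel_iff exp_gt_zero zero_less_numeral)
qed

lemma lnN: "exp 1 < N \<Longrightarrow> 1 \<le> ln (N::real)"
  by (metis ln_exp ln_le_cancel_iff exp_gt_zero less_imp_le order.strict_trans)



lemma log_part:
  fixes f :: "'a::real_normed_vector \<Rightarrow> 'b::real_normed_vector"
  assumes C: "C > 0"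
    and hyp: "\<forall>x y. norm(x-y) < 1 \<longrightarrow> norm(f x - f y) \<le> C*norm(x-y)*ln(1/norm(x-y))"
    and N: "N > exp 1"
  shows "norm(f x - f y) \<le> C*ln 4 * ln N * norm(x-y) + C*ln 4 * ln N / N"
proof -
  have e1: "exp (1::real) > 1" by simp
  have N1: "N > 1" using N e1 by linarith
  have N0: "N > 0" using N1 by linarith
  have lN: "1 \<le> ln N" using lnN N by blast
  have l4: "1 \<le> ln (4::real)" by (rule ln4)
  have C4: "C \<le> C * ln 4" using C l4 by (simp add: mult_le_cancel_left1)
  define r where "r = norm (x-y)"
  have r00: "r \<ge> 0" using r_def by simp
  have lNN: "0 \<le> ln N / N" using lN N0 by (intro divide_nonneg_pos; linarith)
  have T1: "0 \<le> C*ln 4 * ln N * r" using C l4 lN r00 by simp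
  have T2: "0 \<le> C*ln 4 * ln N / N"
  proof -
    have "0 \<le> (C*ln 4) * (ln N / N)" by (rule mult_nonneg_nonneg) (use C l4 lNN in auto)
    thus ?thesis by (simp only: times_divide_eq_right)
  qed
  have invN: "1/N < 1" using N1 by simp
  consider "r = 0" | "0 < r" "r \<le> 1/N" | "1/N < r" "r < 1" | "1 \<le> r"
    using r00 by linarith
  then have "norm(f x - f y) \<le> C*ln 4 * ln N * r + C*ln 4 * ln N / N"
  proof cases
    case 1 then show ?thesis using T1 T2 r_def by simp
  next
    case 2
    have "r < 1" using 2 invN by linarith
    hence "norm(f x - f y) \<le> C*r*ln(1/r)" using hyp r_def by auto
    also have "\<dots> = C * (r * ln (1/r))" by (simp add: mult.assoc)
    also have "\<dots> \<le> C * (ln N / N)" using scal_log[OF 2 N] C by (intro mult_left_mono) auto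
    also have "\<dots> \<le> (C*ln 4) * (ln N / N)" using C4 lNN by (rule mult_right_mono)
    also have "\<dots> = C*ln 4 * ln N / N" by simp
    finally show ?thesis using T1 by linarith
  next
    case 3
    have "1/N > 0" using N0 by simp
    hence r0: "r > 0" using 3 by linarith
    have "1/r < N" using 3 r0 N0 by (simp add: field_simps)
    hence lr: "ln (1/r) \<le> ln N" using r0 by (intro ln_mono) auto
    have "norm(f x - f y) \<le> C*r*ln(1/r)" using hyp r_def 3 by auto
    also have "\<dots> \<le> C*r*ln N" using lr C r0 by simp
    also have "\<dots> = C * (ln N * r)" by (simp add: algebra_simps)
    also have "\<dots> \<le> (C*ln 4) * (ln N * r)" using C4 lN r0 by (intro mult_right_mono) auto
    finally show ?thesis using T2 by (simp add: mult.assoc)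
  next
    case 4
    have "norm(f x - f y) \<le> (C * ln 4) * norm (x-y)"
    proof (rule chain[where f=f])
      show "0 \<le> C * ln 4" using C l4 by simp
      show "1/4 \<le> norm (x-y)" using 4 r_def by simp
    next
      fix u v :: 'a assume a: "1/4 \<le> norm (u-v)" "norm (u-v) \<le> 1/2"
      have p: "norm (u-v) > 0" using a by linarith
      have "1/norm(u-v) \<le> 4" using a p by (simp add: field_simps)
      hence "ln (1/norm(u-v)) \<le> ln 4" using p by (intro ln_mono) auto
      hence "C*norm(u-v)*ln (1/norm(u-v)) \<le> C*norm(u-v)*ln 4" using C p by simp
      moreover have "norm (f u - f v) \<le> C*norm(u-v)*ln (1/norm(u-v))"
        using hyp a by auto
      ultimately show "norm (f u - f v) \<le> C * ln 4 * norm (u - v)"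
        by (simp add: algebra_simps)
    qed
    also have "\<dots> \<le> (C*ln 4) * (ln N * r)" using C l4 lN 4 r_def
      by (intro mult_left_mono) (auto simp: mult_le_cancel_right1)
    finally show ?thesis using T2 by (simp add: mult.assoc)
  qed
  thus ?thesis using r_def by simp
qed


lemma sqrt_le_self1: "1 \<le> (x::real) \<Longrightarrow> sqrt x \<le> x"
proof -
  assume x: "1 \<le> x"
  have s1: "1 \<le> sqrt x" using x by simp
  have "sqrt x = sqrt x * 1" by simp
  also have "\<dots> \<le> sqrt x * sqrt x" using s1 by (intro mult_left_mono) auto
  also have "\<dots> = x" using x by simp
  finally show ?thesis .
qed

lemma sqrt_part:
  fixes f :: "'a::real_normed_vector \<Rightarrow> 'b::real_normed_vector"
  assumes C: "C > 0"
    and hyp: "\<forall>x y. norm(x-y) < 1 \<longrightarrow> norm(f x - f y) \<le> C*norm(x-y)* sqrt(ln(1/norm(x-y)))"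
    and N: "N > exp 1"
  shows "norm(f x - f y) \<le> C*ln 4 * sqrt (ln N) * norm(x-y) + C*ln 4 * ln N / N"
proof -
  have e1: "exp (1::real) > 1" by simp
  have N1: "N > 1" using N e1 by linarith
  have N0: "N > 0" using N1 by linarith
  have lN: "1 \<le> ln N" using lnN N by blast
  have sN: "1 \<le> sqrt (ln N)" using lN by simp
  have l4: "1 \<le> ln (4::real)" by (rule ln4)
  have C4: "C \<le> C * ln 4" using C l4 by (simp add: mult_le_cancel_left1)
  define r where "r = norm (x-y)"
  have r00: "r \<ge> 0" using r_def by simp
  have lNN: "0 \<le> ln N / N" using lN N0 by (intro divide_nonneg_pos; linarith)
  have T1: "0 \<le> C*ln 4 * sqrt (ln N) * r" using C l4 sN r00 by simp
  have T2: "0 \<le> C*ln 4 * ln N / N"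
  proof -
    have "0 \<le> (C*ln 4) * (ln N / N)" by (rule mult_nonneg_nonneg) (use C l4 lNN in auto)
    thus ?thesis by (simp only: times_divide_eq_right)
  qed
  have invN: "1/N < 1" using N1 by simp
  consider "r = 0" | "0 < r" "r \<le> 1/N" | "1/N < r" "r < 1" | "1 \<le> r"
    using r00 by linarith
  then have "norm(f x - f y) \<le> C*ln 4 * sqrt (ln N) * r + C*ln 4 * ln N / N"
  proof cases
    case 1 then show ?thesis using T1 T2 r_def by simp
  next
    case 2
    have "r < 1" using 2 invN by linarith
    hence "norm(f x - f y) \<le> C*r* sqrt(ln(1/r))" using hyp r_def by auto
    also have "\<dots> = C * (r * sqrt (ln (1/r)))" by (simp add: mult.assoc)
    also have "\<dots> \<le> C * (ln N / N)" using scal_sqrt[OF 2 N] C by (intro mult_left_mono) auto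
    also have "\<dots> \<le> (C*ln 4) * (ln N / N)" using C4 lNN by (rule mult_right_mono)
    also have "\<dots> = C*ln 4 * ln N / N" by simp
    finally show ?thesis using T1 by linarith
  next
    case 3
    have "1/N > 0" using N0 by simp
    hence r0: "r > 0" using 3 by linarith
    have "1/r < N" using 3 r0 N0 by (simp add: field_simps)
    hence "ln (1/r) \<le> ln N" using r0 by (intro ln_mono) auto
    hence lr: "sqrt (ln (1/r)) \<le> sqrt (ln N)" by (rule real_sqrt_le_mono)
    have "norm(f x - f y) \<le> C*r* sqrt(ln(1/r))" using hyp r_def 3 by auto
    also have "\<dots> \<le> C*r* sqrt (ln N)" using lr C r0 by simp
    also have "\<dots> = C * (sqrt (ln N) * r)" by (simp add: algebra_simps)
    also have "\<dots> \<le> (C*ln 4) * (sqrt (ln N) * r)" using C4 sN r0 by (intro mult_right_mono) auto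
    finally show ?thesis using T2 by (simp add: mult.assoc)
  next
    case 4
    have s4: "sqrt (ln 4) \<le> ln (4::real)" using l4 by (rule sqrt_le_self1)
    have "norm(f x - f y) \<le> (C * ln 4) * norm (x-y)"
    proof (rule chain[where f=f])
      show "0 \<le> C * ln 4" using C l4 by simp
      show "1/4 \<le> norm (x-y)" using 4 r_def by simp
    next
      fix u v :: 'a assume a: "1/4 \<le> norm (u-v)" "norm (u-v) \<le> 1/2"
      have p: "norm (u-v) > 0" using a by linarith
      have "1/norm(u-v) \<le> 4" using a p by (simp add: field_simps)
      hence "ln (1/norm(u-v)) \<le> ln 4" using p by (intro ln_mono) auto
      hence "sqrt (ln (1/norm(u-v))) \<le> sqrt (ln 4)" by (rule real_sqrt_le_mono)
      hence "sqrt (ln (1/norm(u-v))) \<le> ln 4" using s4 by linarith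
      hence "C*norm(u-v)* sqrt (ln (1/norm(u-v))) \<le> C*norm(u-v)*ln 4" using C p by simp
      moreover have "norm (f u - f v) \<le> C*norm(u-v)* sqrt (ln (1/norm(u-v)))"
        using hyp a by auto
      ultimately show "norm (f u - f v) \<le> C * ln 4 * norm (u - v)"
        by (simp add: algebra_simps)
    qed
    also have "\<dots> \<le> (C*ln 4) * (sqrt (ln N) * r)" using C l4 sN 4 r_def
      by (intro mult_left_mono) (auto simp: mult_le_cancel_right1)
    finally show ?thesis using T2 by (simp add: mult.assoc)
  qed
  thus ?thesis using r_def by simp
qed


lemma frob_eq: "frob_norm A = norm A"
proof -
  have "norm A = sqrt (\<Sum>i\<in>UNIV. (norm (A $ i))\<^sup>2)" by (simp add: norm_vec_def L2_set_def)
  also have "\<dots> = sqrt (\<Sum>i\<in>UNIV. \<Sum>j\<in>UNIV. (A $ i $ j)\<^sup>2)"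
    by (simp add: norm_vec_def L2_set_def sum_nonneg)
  finally show ?thesis by (simp add: frob_norm_def)
qed

theorem proposition4p7:
  fixes \<sigma> :: "real ^ 'd \<Rightarrow> real ^ 'm ^ 'd"
    and b :: "real ^ 'd \<Rightarrow> real ^ 'd"
  assumes cont_sigma: "continuous_on UNIV \<sigma>"
    and cont_b: "continuous_on UNIV b"
    and hyp: "\<exists>C>0. \<forall>x y. norm (x - y) < 1 \<longrightarrow>
        frob_norm (\<sigma> x - \<sigma> y) \<le> C * norm (x - y) * sqrt (ln (1 / norm (x - y))) \<and>
        norm (b x - b y) \<le> C * norm (x - y) * ln (1 / norm (x - y))"
  shows "\<exists>C>0. \<exists>\<mu>>0. \<forall>N::nat. real N > exp 1 \<longrightarrow>
        (\<forall>x y. norm x \<le> real N \<and> norm y \<le> real N \<longrightarrow>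
          frob_norm (\<sigma> x - \<sigma> y) \<le> C * sqrt (ln (real N)) * norm (x - y) + C * ln (real N) / real N powr \<mu> \<and>
          norm (b x - b y) \<le> C * ln (real N) * norm (x - y) + C * ln (real N) / real N powr \<mu>)"
  proof -
  obtain C where C: "C > 0" and h: "\<forall>x y. norm (x - y) < 1 \<longrightarrow>
        frob_norm (\<sigma> x - \<sigma> y) \<le> C * norm (x - y) * sqrt (ln (1 / norm (x - y))) \<and>
        norm (b x - b y) \<le> C * norm (x - y) * ln (1 / norm (x - y))" using hyp by blast
  have hs: "\<forall>x y. norm (x - y) < 1 \<longrightarrow> norm (\<sigma> x - \<sigma> y) \<le> C * norm (x - y) * sqrt (ln (1 / norm (x - y)))"
    using h by (simp add: frob_eq)
  have hb: "\<forall>x y. norm (x - y) < 1 \<longrightarrow> norm (b x - b y) \<le> C * norm (x - y) * ln (1 / norm (x - y))"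
    using h by simp
  have l4: "1 \<le> ln (4::real)" by (rule ln4)
  have pos: "C * ln 4 > 0" using C l4 by simp
  have main: "\<forall>N::nat. real N > exp 1 \<longrightarrow>
        (\<forall>x y. norm x \<le> real N \<and> norm y \<le> real N \<longrightarrow>
          frob_norm (\<sigma> x - \<sigma> y) \<le> (C * ln 4) * sqrt (ln (real N)) * norm (x - y) + (C * ln 4) * ln (real N) / real N powr 1 \<and>
          norm (b x - b y) \<le> (C * ln 4) * ln (real N) * norm (x - y) + (C * ln 4) * ln (real N) / real N powr 1)"
  proof (intro allI impI)
    fix N :: nat and x y :: "real ^ 'd"
    assume N: "real N > exp 1"
    have "exp (1::real) > 0" by simp
    hence "real N > 0" using N by linarith
    hence p1: "real N powr 1 = real N" by simp
    show "frob_norm (\<sigma> x - \<sigma> y) \<le> (C * ln 4) * sqrt (ln (real N)) * norm (x - y) + (C * ln 4) * ln (real N) / real N powr 1 \<and>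
          norm (b x - b y) \<le> (C * ln 4) * ln (real N) * norm (x - y) + (C * ln 4) * ln (real N) / real N powr 1"
      using sqrt_part[OF C hs N, of x y] log_part[OF C hb N, of x y] p1 by (simp add: frob_eq)
  qed
  show ?thesis
    by (rule exI[of _ "C * ln 4"], rule conjI[OF pos], rule exI[of _ "1::real"], rule conjI[OF zero_less_one])
       (rule main)
qed

end
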